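(* Let $G$ be a bipartite quad-graph rhombically embedded in $\mathbb C$ (a cell decomposition of a simply connected planar domain, all faces rhombi with unit sides), with vertex set $V(G)=B\cup W$ of black and white vertices. Let $$f(\alpha)=\frac{\vartheta_1(\alpha/2)}{\vartheta_2(\alpha/2)},\qquad h(\lambda)=\frac{\vartheta_4((\lambda-\lambda_0)/2)}{\vartheta_3((\lambda-\lambda_0)/2)},$$ with constants $\lambda_0$ and a parameter $\lambda$ such that $f(\alpha-\lambda)\neq0$ for all edge directions $\alpha$ of $G$. Fix $v_0\in B$. Then the discrete exponential function $\mathbf e:V(G)\to\mathbb C$ with parameter $\lambda$, normalized by $\mathbf e(v_0)=1$, is given as follows: for any $v\in V(G)$ and any path $v_0,v_1,\dots,v_m=v$ along edges of $G$ with $v_k-v_{k-1}=e^{i\alpha_k}$, $$\mathbf e(v)=i^m\cdot\begin{cases}1,& v\in B,\\ h(\lambda),& v\in W\end{cases}\cdot\prod_{k=1}^m\frac{1}{f(\alpha_k-\lambda)}$$ (in particular this expression does not depend on the choice of the path).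
   Context: Theta functions $\vartheta_k(z)=\vartheta_k(z|\tau)$, $\operatorname{Im}\tau>0$, are as in Whittaker–Watson: with $q^s:=e^{\pi i\tau s}$, $\vartheta_1(z)=2\sum_{n\ge0}(-1)^nq^{(n+1/2)^2}\sin((2n+1)z)$, $\vartheta_2(z)=2\sum_{n\ge0}q^{(n+1/2)^2}\cos((2n+1)z)$, $\vartheta_3(z)=1+2\sum_{n\ge1}q^{n^2}\cos(2nz)$, $\vartheta_4(z)=1+2\sum_{n\ge1}(-1)^nq^{n^2}\cos(2nz)$. With $g(\alpha,\beta)=f(\alpha-\beta)h(\alpha)h(\beta)$ one has the linear quad-equation on a rhombus with black $x_0,x_{12}$, white $x_1,x_2$, $x_1-x_0=e^{i\alpha}$, $x_2-x_0=e^{i\beta}$: $f(\alpha-\beta)x_{12}-g(\alpha,\beta)x_0=i(h(\beta)x_2-h(\alpha)x_1)$ (here $h(\lambda)h(\lambda+\pi)=1$). The discrete exponential function with parameter $\lambda$ is the Bäcklund transform with parameter $\lambda$ of the zero solution: imposing the quad-equation on the "vertical" quads $(b,w,w^+,b^+)$ over each edge, with zero background values, means that $\mathbf e$ satisfies, for every edge joining a black vertex $b$ to a white vertex $w$ with $w-b=e^{i\alpha}$, the relation $f(\alpha-\lambda)\,\mathbf e(w)=i\,h(\lambda)\,\mathbf e(b)$. It is determined by its value at one vertex. *)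

theory Defs
  imports "HOL-Analysis.Analysis"
begin

section \<open>Theta functions (Whittaker--Watson), with q^s = exp(pi i tau s)\<close>

definition qpow :: "complex \<Rightarrow> complex \<Rightarrow> complex" where
  "qpow \<tau> s = exp (complex_of_real pi * \<i> * \<tau> * s)"

definition theta1 :: "complex \<Rightarrow> complex \<Rightarrow> complex" where
  "theta1 \<tau> z = 2 * (\<Sum>n. (-1) ^ n * qpow \<tau> ((of_nat n + 1/2)^2) * sin ((2 * of_nat n + 1) * z))"

definition theta2 :: "complex \<Rightarrow> complex \<Rightarrow> complex" where
  "theta2 \<tau> z = 2 * (\<Sum>n. qpow \<tau> ((of_nat n + 1/2)^2) * cos ((2 * of_nat n + 1) * z))"

definition theta3 :: "complex \<Rightarrow> complex \<Rightarrow> complex" where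
  "theta3 \<tau> z = 1 + 2 * (\<Sum>n. qpow \<tau> ((of_nat n + 1)^2) * cos (2 * (of_nat n + 1) * z))"

definition theta4 :: "complex \<Rightarrow> complex \<Rightarrow> complex" where
  "theta4 \<tau> z = 1 + 2 * (\<Sum>n. (-1) ^ (n + 1) * qpow \<tau> ((of_nat n + 1)^2) * cos (2 * (of_nat n + 1) * z))"

definition fth :: "complex \<Rightarrow> complex \<Rightarrow> complex" where
  "fth \<tau> a = theta1 \<tau> (a / 2) / theta2 \<tau> (a / 2)"

definition hth :: "complex \<Rightarrow> complex \<Rightarrow> complex \<Rightarrow> complex" where
  "hth \<tau> lam0 l = theta4 \<tau> ((l - lam0) / 2) / theta3 \<tau> ((l - lam0) / 2)"

text \<open>Faces are tuples (b,w1,b',w2)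
  (cyclic order b, w1, b', w2) forming a non-degenerate rhombus with unit sides.\<close>

definition face_set :: "complex \<times> complex \<times> complex \<times> complex \<Rightarrow> complex set" where
  "face_set \<phi> = (case \<phi> of (b, w1, b', w2) \<Rightarrow> {b, w1, b', w2})"

definition rhombic_quad_graph ::
  "complex set \<Rightarrow> complex set \<Rightarrow> (complex \<times> complex) set \<Rightarrow> (complex \<times> complex \<times> complex \<times> complex) set \<Rightarrow> bool" where
  "rhombic_quad_graph B W E F \<longleftrightarrow>
     B \<inter> W = {} \<and> E \<subseteq> B \<times> W \<and>
     (\<forall>(b, w) \<in> E. cmod (w - b) = 1) \<and>
     (\<forall>(b, w1, b', w2) \<in> F. (b, w1) \<in> E \<and> (b, w2) \<in> E \<and> (b', w1) \<in> E \<and> (b', w2) \<in> E \<and>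
         w1 - b = b' - w2 \<and> Im ((w1 - b) * cnj (w2 - b)) \<noteq> 0) \<and>
     (\<forall>e \<in> E. \<exists>(b, w1, b', w2) \<in> F. e \<in> {(b, w1), (b, w2), (b', w1), (b', w2)}) \<and>
     (\<forall>\<phi> \<in> F. \<forall>\<psi> \<in> F. face_set \<phi> \<noteq> face_set \<psi> \<longrightarrow>
         interior (convex hull face_set \<phi>) \<inter> interior (convex hull face_set \<psi>) = {}) \<and>
     (\<forall>\<phi> \<in> F. \<forall>v \<in> B \<union> W. v \<notin> interior (convex hull face_set \<phi>)) \<and>
     (\<forall>e \<in> E. \<forall>\<phi> \<in> F. closed_segment (fst e) (snd e) \<inter> interior (convex hull face_set \<phi>) = {}) \<and>
     (\<forall>e1 \<in> E. \<forall>e2 \<in> E. e1 \<noteq> e2 \<longrightarrow>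
         open_segment (fst e1) (snd e1) \<inter> closed_segment (fst e2) (snd e2) = {})"

definition qg_adj :: "(complex \<times> complex) set \<Rightarrow> complex \<Rightarrow> complex \<Rightarrow> bool" where
  "qg_adj E u v \<longleftrightarrow> (u, v) \<in> E \<or> (v, u) \<in> E"

definition qg_path :: "(complex \<times> complex) set \<Rightarrow> complex list \<Rightarrow> bool" where
  "qg_path E vs \<longleftrightarrow> vs \<noteq> [] \<and> (\<forall>k. Suc k < length vs \<longrightarrow> qg_adj E (vs ! k) (vs ! Suc k))"

definition face_opp :: "(complex \<times> complex \<times> complex \<times> complex) set \<Rightarrow> complex \<Rightarrow> complex \<Rightarrow> complex \<Rightarrow> complex \<Rightarrow> bool" where
  "face_opp F a c x y \<longleftrightarrow> (\<exists>(b, w1, b', w2) \<in> F.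
      ({a, c} = {b, b'} \<and> {x, y} = {w1, w2}) \<or> ({a, c} = {w1, w2} \<and> {x, y} = {b, b'}))"

text \<open>Elementary homotopies of edge paths in the 2-complex: removing a backtrack,
  and pushing a path across a face.\<close>
inductive qg_move :: "(complex \<times> complex) set \<Rightarrow> (complex \<times> complex \<times> complex \<times> complex) set \<Rightarrow> complex list \<Rightarrow> complex list \<Rightarrow> bool"
  for E F where
  backtrack: "qg_adj E a x \<Longrightarrow> qg_move E F (xs @ [a, x, a] @ ys) (xs @ [a] @ ys)"
| flip: "face_opp F a c x y \<Longrightarrow> qg_move E F (xs @ [a, x, c] @ ys) (xs @ [a, y, c] @ ys)"

text \<open>Connected and simply connected (combinatorially: every closed edge path is
  null-homotopic in the cell complex).\<close>
definition qg_simply_connected :: "complex set \<Rightarrow> (complex \<times> complex) set \<Rightarrow> (complex \<times> complex \<times> complex \<times> complex) set \<Rightarrow> bool" where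
  "qg_simply_connected V E F \<longleftrightarrow>
     (\<forall>u \<in> V. \<forall>v \<in> V. \<exists>vs. qg_path E vs \<and> hd vs = u \<and> last vs = v) \<and>
     (\<forall>vs. qg_path E vs \<and> hd vs = last vs \<longrightarrow> equivclp (qg_move E F) vs [hd vs])"

definition disc_exp_rel ::
  "complex set \<Rightarrow> complex set \<Rightarrow> (complex \<times> complex) set \<Rightarrow> complex \<Rightarrow> complex \<Rightarrow> complex \<Rightarrow> (complex \<Rightarrow> complex) \<Rightarrow> bool" where
  "disc_exp_rel B W E \<tau> lam0 l e \<longleftrightarrow>
     (\<forall>(b, w) \<in> E. \<forall>\<alpha>::real. w - b = exp (\<i> * of_real \<alpha>) \<longrightarrow>
        fth \<tau> (of_real \<alpha> - l) * e w = \<i> * hth \<tau> lam0 l * e b)"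

end

theory Submission
  imports Defs
begin

lemma gauss_sum:
  fixes t c :: real
  assumes t: "t > 0" and c: "c \<ge> 0"
  shows "summable (\<lambda>n::nat. exp (- pi * t * (real n + 1/2)^2) * exp ((2 * real n + 1) * c))"
proof (rule summable_comparison_test')
  show "summable (\<lambda>n. exp (-1::real) ^ n)" using summable_geometric[of "exp (-1::real)"] by simp
  define N where "N = nat \<lceil>(2*c+1) / (pi*t)\<rceil>"
  show "norm (exp (- pi * t * (real n + 1/2)^2) * exp ((2 * real n + 1) * c)) \<le> exp (-1) ^ n"
    if "n \<ge> N" for n
  proof -
    define m where "m = real n + 1/2"
    have "real n \<ge> (2*c+1) / (pi*t)" using that unfolding N_def by linarith
    hence "pi * t * real n \<ge> 2*c+1" using t pi_gt_zero by (simp add: field_simps)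
    moreover have "pi*t*m = pi*t*real n + pi*t/2" by (simp add: m_def algebra_simps)
    moreover have "pi*t/2 > 0" using t pi_gt_zero by simp
    ultimately have "pi * t * m \<ge> 2*c+1" by linarith
    hence "pi * t * m * m \<ge> (2*c+1) * m" by (rule mult_right_mono) (simp add: m_def)
    hence ex: "- pi * t * m^2 + (2*m) * c \<le> - real n" unfolding m_def power2_eq_square
      by (simp add: algebra_simps)
    have "norm (exp (- pi * t * (real n + 1/2)^2) * exp ((2 * real n + 1) * c))
       = exp (- pi * t * m^2 + (2*m) * c)" by (simp add: m_def exp_add[symmetric] algebra_simps)
    also have "\<dots> \<le> exp (- real n)" using ex by simp
    also have "\<dots> = exp (-1) ^ n" by (simp add: exp_of_nat_mult[symmetric])
    finally show ?thesis .
  qed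
qed

lemma norm_qpow: "norm (qpow \<tau> (of_real r)) = exp (- pi * Im \<tau> * r)"
  by (simp add: qpow_def norm_exp_eq_Re)

lemma half_sq: "((of_nat n + 1/2)^2 :: complex) = of_real ((real n + 1/2)^2)"
  by simp

lemma norm_sin_bd: "norm (sin (w::complex)) \<le> exp \<bar>Im w\<bar>"
  using cmod_sin_le_exp[of 1 w] by simp
lemma norm_cos_bd: "norm (cos (w::complex)) \<le> exp \<bar>Im w\<bar>"
  using cmod_cos_le_exp[of 1 w] by simp

lemma summ1:
  assumes "Im \<tau> > 0"
  shows "summable (\<lambda>n. (-1) ^ n * qpow \<tau> ((of_nat n + 1/2)^2) * sin ((2 * of_nat n + 1) * z))"
proof (rule summable_comparison_test'[OF gauss_sum[OF assms, of "\<bar>Im z\<bar>"]])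
  fix n :: nat
  have "norm ((-1) ^ n * qpow \<tau> ((of_nat n + 1/2)^2) * sin ((2 * of_nat n + 1) * z))
      = exp (- pi * Im \<tau> * (real n + 1/2)^2) * norm (sin ((2 * of_nat n + 1) * z))"
    by (simp only: half_sq norm_mult norm_qpow norm_power norm_minus_cancel norm_one power_one mult_1_left)
  also have "\<dots> \<le> exp (- pi * Im \<tau> * (real n + 1/2)^2) * exp ((2 * real n + 1) * \<bar>Im z\<bar>)"
    using norm_sin_bd[of "(2 * of_nat n + 1) * z"] by (simp add: abs_mult)
  finally show "norm ((-1) ^ n * qpow \<tau> ((of_nat n + 1/2)^2) * sin ((2 * of_nat n + 1) * z))
      \<le> exp (- pi * Im \<tau> * (real n + 1/2)^2) * exp ((2 * real n + 1) * \<bar>Im z\<bar>)" .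
qed auto

lemma summ2:
  assumes "Im \<tau> > 0"
  shows "summable (\<lambda>n. qpow \<tau> ((of_nat n + 1/2)^2) * cos ((2 * of_nat n + 1) * z))"
proof (rule summable_comparison_test'[OF gauss_sum[OF assms, of "\<bar>Im z\<bar>"]])
  fix n :: nat
  have "norm (qpow \<tau> ((of_nat n + 1/2)^2) * cos ((2 * of_nat n + 1) * z))
      = exp (- pi * Im \<tau> * (real n + 1/2)^2) * norm (cos ((2 * of_nat n + 1) * z))"
    by (simp only: half_sq norm_mult norm_qpow)
  also have "\<dots> \<le> exp (- pi * Im \<tau> * (real n + 1/2)^2) * exp ((2 * real n + 1) * \<bar>Im z\<bar>)"
    using norm_cos_bd[of "(2 * of_nat n + 1) * z"] by (simp add: abs_mult)
  finally show "norm (qpow \<tau> ((of_nat n + 1/2)^2) * cos ((2 * of_nat n + 1) * z))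
      \<le> exp (- pi * Im \<tau> * (real n + 1/2)^2) * exp ((2 * real n + 1) * \<bar>Im z\<bar>)" .
qed auto

lemma cos_npi_c: "cos (of_nat n * complex_of_real pi) = (-1) ^ n"
proof -
  have "cos (of_nat n * complex_of_real pi) = of_real (cos (real n * pi))"
    by (simp add: cos_of_real[symmetric])
  thus ?thesis by simp
qed
lemma sin_npi_c: "sin (of_nat n * complex_of_real pi) = 0"
proof -
  have "sin (of_nat n * complex_of_real pi) = of_real (sin (real n * pi))"
    by (simp add: sin_of_real[symmetric])
  thus ?thesis by simp
qed
lemma arg_shift: "(2 * of_nat n + 1) * (z + complex_of_real pi / 2) = ((2 * of_nat n + 1) * z + of_nat n * pi) + pi/2"
  by (simp add: algebra_simps)
lemma sin_shift: "sin ((2 * of_nat n + 1) * (z + complex_of_real pi / 2)) = (-1)^n * cos ((2 * of_nat n + 1) * z)"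
  unfolding arg_shift by (simp add: sin_add cos_add cos_npi_c sin_npi_c)
lemma cos_shift: "cos ((2 * of_nat n + 1) * (z + complex_of_real pi / 2)) = - ((-1)^n * sin ((2 * of_nat n + 1) * z))"
  unfolding arg_shift by (simp add: sin_add cos_add cos_npi_c sin_npi_c)

lemma theta1_shift: "theta1 \<tau> (z + complex_of_real pi / 2) = theta2 \<tau> z"
  unfolding theta1_def theta2_def sin_shift by (simp add: mult_ac)

lemma theta2_shift: assumes "Im \<tau> > 0"
  shows "theta2 \<tau> (z + complex_of_real pi / 2) = - theta1 \<tau> z"
proof -
  have "theta2 \<tau> (z + complex_of_real pi / 2) = 2 * (\<Sum>n. - ((-1) ^ n * qpow \<tau> ((of_nat n + 1/2)^2) * sin ((2 * of_nat n + 1) * z)))"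
    unfolding theta2_def cos_shift by (simp add: mult_ac)
  also have "\<dots> = - theta1 \<tau> z"
    unfolding theta1_def suminf_minus[OF summ1[OF assms]] by simp
  finally show ?thesis .
qed

context fixes \<tau> :: complex assumes tau: "Im \<tau> > 0" begin

lemma fth_pi: "fth \<tau> (a + complex_of_real pi) = theta2 \<tau> (a/2) / (- theta1 \<tau> (a/2))"
proof -
  have e: "(a + complex_of_real pi) / 2 = a/2 + complex_of_real pi / 2" by (simp add: field_simps)
  show ?thesis unfolding fth_def e theta1_shift theta2_shift[OF tau] ..
qed

lemma fth_2pi: "fth \<tau> (a + 2 * complex_of_real pi) = fth \<tau> a"
proof -
  have e: "(a + 2 * complex_of_real pi) / 2 = (a/2 + complex_of_real pi / 2) + complex_of_real pi / 2" by (simp add: field_simps)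
  show ?thesis unfolding fth_def e theta1_shift theta2_shift[OF tau] by simp
qed

lemma fth_nat: "fth \<tau> (a + of_nat n * (2 * complex_of_real pi)) = fth \<tau> a"
proof (induction n)
  case (Suc n)
  have "a + of_nat (Suc n) * (2 * complex_of_real pi) = (a + of_nat n * (2 * complex_of_real pi)) + 2 * complex_of_real pi"
    by (simp add: algebra_simps)
  thus ?case using Suc fth_2pi by metis
qed simp

lemma fth_int: "fth \<tau> (a + of_int k * (2 * complex_of_real pi)) = fth \<tau> a"
proof (cases "k \<ge> 0")
  case True
  then obtain n where "k = int n" by (metis nonneg_eq_int)
  thus ?thesis using fth_nat by simp
next
  case False
  hence "-k \<ge> 0" by simp
  then obtain n where n: "- k = int n" using nonneg_eq_int[of "-k"] by metis
  have "a = (a + of_int k * (2 * complex_of_real pi)) + of_nat n * (2 * complex_of_real pi)"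
  proof - have "k = - int n" using n by simp thus ?thesis by (simp add: algebra_simps) qed
  hence "fth \<tau> a = fth \<tau> ((a + of_int k * (2 * complex_of_real pi)) + of_nat n * (2 * complex_of_real pi))"
    by (rule arg_cong)
  thus ?thesis using fth_nat by metis
qed

lemma fth_prod: "fth \<tau> a \<noteq> 0 \<Longrightarrow> fth \<tau> a * fth \<tau> (a + complex_of_real pi) = -1"
  unfolding fth_pi by (simp add: fth_def field_simps)

lemma fth_exp_eq:
  assumes "exp (\<i> * complex_of_real \<alpha>) = exp (\<i> * complex_of_real \<beta>)"
  shows "fth \<tau> (complex_of_real \<alpha> - l) = fth \<tau> (complex_of_real \<beta> - l)"
proof -
  obtain n :: int where "\<i> * complex_of_real \<alpha> = \<i> * complex_of_real \<beta> + (of_int (2 * n) * pi) * \<i>"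
    using assms exp_eq by blast
  hence "\<i> * (complex_of_real \<alpha> - (complex_of_real \<beta> + of_int n * (2 * pi))) = 0"
    by (simp add: algebra_simps)
  hence "complex_of_real \<alpha> = complex_of_real \<beta> + of_int n * (2 * pi)" by simp
  hence "complex_of_real \<alpha> - l = (complex_of_real \<beta> - l) + of_int n * (2 * complex_of_real pi)"
    by simp
  thus ?thesis using fth_int by metis
qed

end

fun pw :: "(complex \<Rightarrow> complex) \<Rightarrow> complex list \<Rightarrow> complex" where
  "pw s (u # v # r) = s (v - u) * pw s (v # r)"
| "pw s _ = 1"

lemma pw_append: "pw s (xs @ a # ys) = pw s (xs @ [a]) * pw s (a # ys)"
proof (induction xs)
  case Nil thus ?case by simp
next
  case (Cons x xs)
  thus ?case by (cases xs) auto
qed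

lemma pw_snoc: "pw s (xs @ [u, v]) = pw s (xs @ [u]) * s (v - u)"
  using pw_append[of s xs u "[v]"] by simp

lemma pw_nth: "pw s vs = (\<Prod>k < length vs - 1. s (vs ! Suc k - vs ! k))"
proof (induction vs rule: rev_induct)
  case Nil thus ?case by simp
next
  case (snoc v vs)
  show ?case
  proof (cases vs rule: rev_cases)
    case Nil thus ?thesis by simp
  next
    case (snoc ws u)
    have "pw s (ws @ [u, v]) = pw s (ws @ [u]) * s (v - u)" by (rule pw_snoc)
    also have "pw s (ws @ [u]) = (\<Prod>k < length ws. s ((ws @ [u]) ! Suc k - (ws @ [u]) ! k))"
      using snoc.IH snoc by simp
    also have "\<dots> = (\<Prod>k < length ws. s ((ws @ [u, v]) ! Suc k - (ws @ [u, v]) ! k))"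
      by (rule prod.cong) (auto simp: nth_append)
    finally show ?thesis using snoc by (simp add: nth_append)
  qed
qed

lemma pw_move:
  assumes inv: "\<And>a x. qg_adj E a x \<Longrightarrow> s (x - a) * s (a - x) = 1"
    and par: "\<And>a c x y. face_opp F a c x y \<Longrightarrow> a + c = x + y"
    and m: "qg_move E F xs ys"
  shows "pw s xs = pw s ys"
  using m
proof cases
  case (backtrack a x xs' ys')
  have "pw s (xs' @ [a, x, a] @ ys') = pw s (xs' @ [a]) * pw s (a # x # a # ys')"
    using pw_append[of s xs' a "x # a # ys'"] by simp
  also have "\<dots> = pw s (xs' @ [a]) * pw s (a # ys')" using inv[OF backtrack(3)] by simp
  finally show ?thesis using backtrack pw_append[of s xs' a ys'] by simp
next
  case (flip a c x y xs' ys')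
  have e: "a + c = x + y" using par[OF flip(3)] .
  have "pw s (xs' @ [a, x, c] @ ys') = pw s (xs' @ [a]) * pw s (a # x # c # ys')"
    using pw_append[of s xs' a "x # c # ys'"] by simp
  also have "pw s (a # x # c # ys') = pw s (a # y # c # ys')"
  proof -
    have "c - x = y - a" "c - y = x - a" using e by (simp_all add: algebra_simps)
    thus ?thesis by simp
  qed
  also have "pw s (xs' @ [a]) * \<dots> = pw s (xs' @ [a, y, c] @ ys')"
    using pw_append[of s xs' a "y # c # ys'"] by simp
  finally show ?thesis using flip by simp
qed

lemma pw_equiv:
  assumes inv: "\<And>a x. qg_adj E a x \<Longrightarrow> s (x - a) * s (a - x) = 1"
    and par: "\<And>a c x y. face_opp F a c x y \<Longrightarrow> a + c = x + y"
    and m: "equivclp (qg_move E F) xs ys"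
  shows "pw s xs = pw s ys"
proof -
  have mv: "\<And>p q. qg_move E F p q \<Longrightarrow> pw s p = pw s q"
    by (rule pw_move[of E s F]) (use inv par in auto)
  show ?thesis using m unfolding equivclp_def
  proof (induction rule: rtranclp_induct)
    case (step y z)
    thus ?case using mv[of y z] mv[of z y] unfolding symclp_def by auto
  qed simp
qed

lemma face_sum2: "{p, q} = {r, t} \<Longrightarrow> p + q = r + (t::complex)"
  by (auto simp: doubleton_eq_iff add.commute)

lemma face_opp_par:
  assumes G: "rhombic_quad_graph B W E F" and f: "face_opp F a c x y"
  shows "a + c = x + y"
proof -
  from f obtain b w1 b' w2 where mem: "(b, w1, b', w2) \<in> F" and
    h: "({a, c} = {b, b'} \<and> {x, y} = {w1, w2}) \<or> ({a, c} = {w1, w2} \<and> {x, y} = {b, b'})"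
    unfolding face_opp_def by blast
  have "\<forall>(b, w1, b', w2) \<in> F. w1 - b = b' - w2" using G unfolding rhombic_quad_graph_def by blast
  hence "w1 - b = b' - w2" using mem by fast
  hence s: "b + b' = w1 + w2" by (simp add: algebra_simps)
  from h show ?thesis
  proof
    assume H: "{a, c} = {b, b'} \<and> {x, y} = {w1, w2}"
    have "a + c = b + b'" by (rule face_sum2[OF conjunct1[OF H]])
    moreover have "x + y = w1 + w2" by (rule face_sum2[OF conjunct2[OF H]])
    ultimately show ?thesis using s by simp
  next
    assume H: "{a, c} = {w1, w2} \<and> {x, y} = {b, b'}"
    have "a + c = w1 + w2" by (rule face_sum2[OF conjunct1[OF H]])
    moreover have "x + y = b + b'" by (rule face_sum2[OF conjunct2[OF H]])
    ultimately show ?thesis using s by simp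
  qed
qed

definition stp :: "complex \<Rightarrow> complex \<Rightarrow> complex \<Rightarrow> complex" where
  "stp \<tau> l d = \<i> / fth \<tau> (of_real (Arg d) - l)"

lemma stp_exp: assumes tau: "Im \<tau> > 0"
  shows "stp \<tau> l (exp (\<i> * of_real \<alpha>)) = \<i> / fth \<tau> (of_real \<alpha> - l)"
proof -
  obtain k :: int where k: "Im (\<i> * of_real \<alpha>) - of_int k * (2 * pi) = Arg (exp (\<i> * of_real \<alpha>))"
    using Arg_exp_diff_2pi by blast
  hence "complex_of_real (Arg (exp (\<i> * of_real \<alpha>))) - l = (of_real \<alpha> - l) + of_int (-k) * (2 * complex_of_real pi)"
    by (simp flip: k add: algebra_simps)
  thus ?thesis unfolding stp_def using fth_int[OF tau] by metis
qed

lemma unit_exp: "cmod d = 1 \<Longrightarrow> d = exp (\<i> * of_real (Arg d))"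
  using Arg_eq[of d] by fastforce

lemma exp_pi_shift: "exp (\<i> * of_real (\<alpha> + pi)) = - exp (\<i> * of_real \<alpha>)"
  by (simp add: distrib_left exp_add)

lemma qp_nil: "\<not> qg_path E []" by (simp add: qg_path_def)
lemma qp_single: "qg_path E [u]" by (simp add: qg_path_def)
lemma qp_cons2: "qg_path E (u # v # r) \<longleftrightarrow> qg_adj E u v \<and> qg_path E (v # r)"
proof
  assume h: "qg_path E (u # v # r)"
  have "qg_adj E u v" using h unfolding qg_path_def by force
  moreover have "qg_path E (v # r)" unfolding qg_path_def
  proof (intro conjI allI impI)
    fix k assume "Suc k < length (v # r)"
    thus "qg_adj E ((v # r) ! k) ((v # r) ! Suc k)" using h unfolding qg_path_def
      by (metis length_Cons nth_Cons_Suc Suc_less_eq)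
  qed simp
  ultimately show "qg_adj E u v \<and> qg_path E (v # r)" ..
next
  assume h: "qg_adj E u v \<and> qg_path E (v # r)"
  show "qg_path E (u # v # r)" unfolding qg_path_def
  proof (intro conjI allI impI)
    fix k assume k: "Suc k < length (u # v # r)"
    show "qg_adj E ((u # v # r) ! k) ((u # v # r) ! Suc k)"
    proof (cases k)
      case 0 thus ?thesis using h by simp
    next
      case (Suc j) thus ?thesis using h k unfolding qg_path_def by auto
    qed
  qed simp
qed

lemma qg_adj_sym: "qg_adj E u v \<Longrightarrow> qg_adj E v u" by (auto simp: qg_adj_def)

lemma qp_append: "qg_path E p \<Longrightarrow> qg_path E q \<Longrightarrow> last p = hd q \<Longrightarrow> qg_path E (p @ tl q)"
proof (induction p)
  case Nil thus ?case by (simp add: qp_nil)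
next
  case (Cons u r)
  show ?case
  proof (cases r)
    case Nil thus ?thesis using Cons.prems by (cases q) auto
  next
    case (Cons v r')
    thus ?thesis using Cons.prems Cons.IH by (simp add: qp_cons2)
  qed
qed

lemma qp_snoc: "qg_path E p \<Longrightarrow> qg_adj E (last p) v \<Longrightarrow> qg_path E (p @ [v])"
  using qp_append[of E p "[last p, v]"] by (simp add: qp_cons2 qp_single)

lemma qp_rev: "qg_path E q \<Longrightarrow> qg_path E (rev q)"
proof (induction q)
  case Nil thus ?case by simp
next
  case (Cons u r)
  show ?case
  proof (cases r)
    case Nil thus ?thesis by (simp add: qp_single)
  next
    case (Cons v r')
    hence "qg_adj E u v" "qg_path E r" using Cons.prems by (auto simp: qp_cons2)
    hence "qg_path E (rev r)" "qg_adj E (last (rev r)) u" using Cons.IH Cons by (auto intro: qg_adj_sym)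
    thus ?thesis using qp_snoc by simp
  qed
qed

lemma pw_rev_inv:
  assumes inv: "\<And>a x. qg_adj E a x \<Longrightarrow> s (x - a) * s (a - x) = 1"
    and p: "qg_path E vs"
  shows "pw s (rev vs) * pw s vs = 1"
  using p
proof (induction vs)
  case (Cons u r)
  show ?case
  proof (cases r)
    case Nil thus ?thesis by simp
  next
    case (Cons v r')
    have adj: "qg_adj E u v" and p': "qg_path E r" using "Cons.prems" Cons qp_cons2[of E u v r'] by auto
    have "pw s (rev (u # v # r')) = pw s (rev r' @ [v, u])" by simp
    also have "\<dots> = pw s (rev (v # r')) * s (u - v)" using pw_snoc[of s "rev r'" v u] by simp
    finally have X: "pw s (rev (u # v # r')) * pw s (u # v # r') = (pw s (rev (v # r')) * pw s (v # r')) * (s (u - v) * s (v - u))"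
      by (simp add: mult_ac)
    have h1: "pw s (rev (v # r')) * pw s (v # r') = 1" using "Cons.IH"[OF p'] Cons by simp
    have h2: "s (u - v) * s (v - u) = 1" using inv[OF adj] by (simp add: mult.commute)
    show ?thesis unfolding Cons X h1 h2 by simp
  qed
qed auto

lemma last_append_tl: "p \<noteq> [] \<Longrightarrow> r \<noteq> [] \<Longrightarrow> hd r = last p \<Longrightarrow> last (p @ tl r) = last r"
  by (cases r) (auto simp: last_append)

lemma qp_butlast: "qg_path E (xs @ [u, v]) \<Longrightarrow> qg_adj E u v \<and> qg_path E (xs @ [u])"
proof (induction xs)
  case Nil thus ?case by (simp add: qp_cons2 qp_single)
next
  case (Cons x xs)
  show ?case
  proof (cases xs)
    case Nil thus ?thesis using Cons.prems by (simp add: qp_cons2 qp_single)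
  next
    case (Cons y ys)
    thus ?thesis using Cons.prems Cons.IH by (simp add: qp_cons2)
  qed
qed

lemma neg_exp_shift: "d = exp (\<i> * of_real \<alpha>) \<Longrightarrow> - d = exp (\<i> * of_real (\<alpha> + pi))"
  using exp_pi_shift[of \<alpha>] by simp

lemma snoc_obtain: assumes "p \<noteq> []" "last p = v" shows "\<exists>p'. p = p' @ [v]"
proof -
  have "p = butlast p @ [last p]" using assms(1) by simp
  thus ?thesis using assms(2) by blast
qed

lemma cons_obtain: "q \<noteq> [] \<Longrightarrow> hd q = v \<Longrightarrow> \<exists>r. q = v # r"
  by (cases q) auto

theorem theorem5:
  fixes B W :: "complex set"
    and E :: "(complex \<times> complex) set"
    and F :: "(complex \<times> complex \<times> complex \<times> complex) set"
    and \<tau> lam0 l v0 :: complex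
  assumes tau: "Im \<tau> > 0"
    and G: "rhombic_quad_graph B W E F"
    and sc: "qg_simply_connected (B \<union> W) E F"
    and v0: "v0 \<in> B"
    and fnz: "\<And>u v (\<alpha>::real). qg_adj E u v \<Longrightarrow> v - u = exp (\<i> * of_real \<alpha>) \<Longrightarrow>
               fth \<tau> (of_real \<alpha> - l) \<noteq> 0"
  shows "(\<exists>e. disc_exp_rel B W E \<tau> lam0 l e \<and> e v0 = 1 \<and>
            (\<forall>vs (\<alpha>s::real list). qg_path E vs \<and> hd vs = v0 \<and> length \<alpha>s + 1 = length vs \<and>
               (\<forall>k < length \<alpha>s. vs ! Suc k - vs ! k = exp (\<i> * of_real (\<alpha>s ! k))) \<longrightarrow>
               e (last vs) = \<i> ^ length \<alpha>s * (if last vs \<in> B then 1 else hth \<tau> lam0 l) *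
                 (\<Prod>k < length \<alpha>s. 1 / fth \<tau> (of_real (\<alpha>s ! k) - l))))
       \<and> (hth \<tau> lam0 l \<noteq> 0 \<longrightarrow>
          (\<forall>e. disc_exp_rel B W E \<tau> lam0 l e \<and> e v0 = 1 \<longrightarrow>
            (\<forall>vs (\<alpha>s::real list). qg_path E vs \<and> hd vs = v0 \<and> length \<alpha>s + 1 = length vs \<and>
               (\<forall>k < length \<alpha>s. vs ! Suc k - vs ! k = exp (\<i> * of_real (\<alpha>s ! k))) \<longrightarrow>
               e (last vs) = \<i> ^ length \<alpha>s * (if last vs \<in> B then 1 else hth \<tau> lam0 l) *
                 (\<Prod>k < length \<alpha>s. 1 / fth \<tau> (of_real (\<alpha>s ! k) - l)))))"
proof -
  define s where "s = stp \<tau> l"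
  define h where "h = hth \<tau> lam0 l"
  define col where "col v = (if v \<in> B then 1 else h)" for v
  have G3: "B \<inter> W = {} \<and> E \<subseteq> B \<times> W \<and> (\<forall>(b, w) \<in> E. cmod (w - b) = 1)"
    using G unfolding rhombic_quad_graph_def by (elim conjE) (intro conjI; assumption)
  have BW: "B \<inter> W = {}" and EBW: "E \<subseteq> B \<times> W" using G3 by blast+
  have unit: "\<And>b w. (b, w) \<in> E \<Longrightarrow> cmod (w - b) = 1" using G3 by blast
  have adj_unit: "cmod (x - a) = 1" if "qg_adj E a x" for a x
    using that unit norm_minus_commute[of x a] unfolding qg_adj_def by auto
  have s_exp: "s (exp (\<i> * of_real \<alpha>)) = \<i> / fth \<tau> (of_real \<alpha> - l)" for \<alpha>
    unfolding s_def by (rule stp_exp[OF tau])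
  have inv: "s (x - a) * s (a - x) = 1" if adj: "qg_adj E a x" for a x
  proof -
    define \<alpha> where "\<alpha> = Arg (x - a)"
    have e1: "x - a = exp (\<i> * of_real \<alpha>)" unfolding \<alpha>_def by (rule unit_exp[OF adj_unit[OF adj]])
    have e2: "a - x = exp (\<i> * of_real (\<alpha> + pi))"
    proof -
      have "a - x = - (x - a)" by simp
      also have "\<dots> = exp (\<i> * of_real (\<alpha> + pi))" by (rule neg_exp_shift[OF e1])
      finally show ?thesis .
    qed
    have nz: "fth \<tau> (of_real \<alpha> - l) \<noteq> 0" using fnz[OF adj e1] .
    have pr: "fth \<tau> (of_real \<alpha> - l) * fth \<tau> ((of_real \<alpha> - l) + of_real pi) = -1"
      by (rule fth_prod[OF tau nz])
    have sh: "of_real (\<alpha> + pi) - l = (of_real \<alpha> - l) + complex_of_real pi" by simp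
    have s2: "s (a - x) = \<i> / fth \<tau> ((of_real \<alpha> - l) + of_real pi)"
      unfolding e2 s_exp sh ..
    have s1: "s (x - a) = \<i> / fth \<tau> (of_real \<alpha> - l)" unfolding e1 s_exp ..
    have "s (x - a) * s (a - x) = (\<i> * \<i>) / (fth \<tau> (of_real \<alpha> - l) * fth \<tau> ((of_real \<alpha> - l) + of_real pi))"
      unfolding s1 s2 by simp
    also have "\<dots> = 1" unfolding pr by simp
    finally show ?thesis .
  qed
  have par: "\<And>a c x y. face_opp F a c x y \<Longrightarrow> a + c = x + y" using face_opp_par[OF G] by blast
  have formula: "pw s vs = \<i> ^ length \<alpha>s * (\<Prod>k < length \<alpha>s. 1 / fth \<tau> (of_real (\<alpha>s ! k) - l))"
    if len: "length \<alpha>s + 1 = length vs"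
      and st: "\<forall>k < length \<alpha>s. vs ! Suc k - vs ! k = exp (\<i> * of_real (\<alpha>s ! k))" for vs \<alpha>s
  proof -
    have len': "length vs - 1 = length \<alpha>s" using len by simp
    have "pw s vs = (\<Prod>k < length \<alpha>s. s (vs ! Suc k - vs ! k))" using pw_nth[of s vs] unfolding len' .
    also have "\<dots> = (\<Prod>k < length \<alpha>s. \<i> * (1 / fth \<tau> (of_real (\<alpha>s ! k) - l)))"
      by (rule prod.cong) (simp_all add: st s_exp)
    also have "\<dots> = \<i> ^ length \<alpha>s * (\<Prod>k < length \<alpha>s. 1 / fth \<tau> (of_real (\<alpha>s ! k) - l))"
      by (simp only: prod.distrib prod_constant card_lessThan)
    finally show ?thesis .
  qed
  have conn: "\<And>v. v \<in> B \<union> W \<Longrightarrow> \<exists>p. qg_path E p \<and> hd p = v0 \<and> last p = v"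
    using sc v0 unfolding qg_simply_connected_def by blast
  have closed: "pw s c = 1" if "qg_path E c" "hd c = last c" for c
  proof -
    have eqv: "equivclp (qg_move E F) c [hd c]" using sc that unfolding qg_simply_connected_def by blast
    have "pw s c = pw s [hd c]"
      apply (rule pw_equiv[of E s F])
        apply (rule inv, assumption)
       apply (rule par, assumption)
      apply (rule eqv)
      done
    thus ?thesis by simp
  qed
  have indep: "pw s p = pw s q" if p: "qg_path E p" "hd p = v0" "last p = v"
    and q: "qg_path E q" "hd q = v0" "last q = v" for p q v
  proof -
    have pne: "p \<noteq> []" and qne: "q \<noteq> []" using p q by (auto simp: qp_nil)
    define c where "c = p @ tl (rev q)"
    have cp: "qg_path E c" unfolding c_def
      by (rule qp_append[OF p(1) qp_rev[OF q(1)]]) (simp add: p q hd_rev)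
    have "hd c = v0" unfolding c_def using pne p by simp
    moreover have "last c = v0" unfolding c_def using pne qne p q
      by (subst last_append_tl) (auto simp: hd_rev last_rev)
    ultimately have c1: "pw s c = 1" using closed[OF cp] by simp
    obtain p' where pv: "p = p' @ [v]" using snoc_obtain[OF pne p(3)] by blast
    have rqne: "rev q \<noteq> []" using qne by simp
    have hrq: "hd (rev q) = v" using q(3) qne by (simp add: hd_rev)
    obtain r' where rq: "rev q = v # r'" using cons_obtain[OF rqne hrq] by blast
    have ceq: "c = p' @ v # r'" unfolding c_def pv rq by simp
    have "pw s c = pw s (p' @ [v]) * pw s (v # r')" unfolding ceq by (rule pw_append)
    also have "\<dots> = pw s p * pw s (rev q)" unfolding pv rq ..
    finally have 1: "pw s p * pw s (rev q) = 1" using c1 by simp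
    have 2: "pw s (rev q) * pw s q = 1"
      apply (rule pw_rev_inv[of E s])
       apply (rule inv, assumption)
      apply (rule q(1))
      done
    have "pw s p = pw s p * (pw s (rev q) * pw s q)" using 2 by simp
    also have "\<dots> = pw s q" using 1 by (simp add: mult.assoc[symmetric])
    finally show ?thesis .
  qed
  define P where "P v = (SOME p. qg_path E p \<and> hd p = v0 \<and> last p = v)" for v
  have Pprop: "qg_path E (P v) \<and> hd (P v) = v0 \<and> last (P v) = v" if "\<exists>p. qg_path E p \<and> hd p = v0 \<and> last p = v" for v
    unfolding P_def using someI_ex[OF that] .
  have Pval: "pw s (P (last p)) = pw s p" if "qg_path E p" "hd p = v0" for p
  proof -
    have "\<exists>q. qg_path E q \<and> hd q = v0 \<and> last q = last p" using that by blast
    hence Pp: "qg_path E (P (last p)) \<and> hd (P (last p)) = v0 \<and> last (P (last p)) = last p"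
      by (rule Pprop)
    show ?thesis using indep[where p="P (last p)" and q=p and v="last p"] Pp that by blast
  qed
  define e where "e v = col v * pw s (P v)" for v
  have part1: "disc_exp_rel B W E \<tau> lam0 l e \<and> e v0 = 1 \<and>
            (\<forall>vs (\<alpha>s::real list). qg_path E vs \<and> hd vs = v0 \<and> length \<alpha>s + 1 = length vs \<and>
               (\<forall>k < length \<alpha>s. vs ! Suc k - vs ! k = exp (\<i> * of_real (\<alpha>s ! k))) \<longrightarrow>
               e (last vs) = \<i> ^ length \<alpha>s * (if last vs \<in> B then 1 else hth \<tau> lam0 l) *
                 (\<Prod>k < length \<alpha>s. 1 / fth \<tau> (of_real (\<alpha>s ! k) - l)))"
  proof (intro conjI allI impI)
    show "disc_exp_rel B W E \<tau> lam0 l e" unfolding disc_exp_rel_def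
    proof (intro ballI allI impI, clarify)
      fix b w \<alpha> assume bw: "(b, w) \<in> E" and ex: "w - b = exp (\<i> * complex_of_real \<alpha>)"
      have bB: "b \<in> B" and wW: "w \<in> W" using bw EBW by auto
      have wB: "w \<notin> B" using wW BW by auto
      have adj: "qg_adj E b w" using bw by (simp add: qg_adj_def)
      obtain p where p: "qg_path E p" "hd p = v0" "last p = b" using conn bB by blast
      have p2: "qg_path E (p @ [w])" using qp_snoc[OF p(1)] adj p(3) by simp
      have pne: "p \<noteq> []" using p(1) by (auto simp: qp_nil)
      have h2: "hd (p @ [w]) = v0" using pne p by simp
      have ew0: "e w = h * pw s (p @ [w])" unfolding e_def col_def using wB Pval[OF p2 h2] by simp
      obtain p' where pv: "p = p' @ [b]" using snoc_obtain[OF pne p(3)] by blast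
      have pws: "pw s (p @ [w]) = pw s p * s (w - b)"
        unfolding pv using pw_snoc[of s p' b w] by simp
      have sw: "s (w - b) = \<i> / fth \<tau> (of_real \<alpha> - l)" unfolding ex by (rule s_exp)
      have ew: "e w = h * pw s p * (\<i> / fth \<tau> (of_real \<alpha> - l))" using ew0 pws sw by (simp add: mult.assoc)
      have eb: "e b = pw s p" unfolding e_def col_def using bB Pval[OF p(1) p(2)] p(3) by simp
      have nz: "fth \<tau> (of_real \<alpha> - l) \<noteq> 0" using fnz[OF adj ex] .
      show "fth \<tau> (of_real \<alpha> - l) * e w = \<i> * hth \<tau> lam0 l * e b"
        using ew eb nz unfolding h_def by (simp add: field_simps)
    qed
    show "e v0 = 1" unfolding e_def col_def using v0 Pval[OF qp_single[of E v0]] by simp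
  next
    fix vs and \<alpha>s :: "real list"
    assume a: "qg_path E vs \<and> hd vs = v0 \<and> length \<alpha>s + 1 = length vs \<and>
               (\<forall>k < length \<alpha>s. vs ! Suc k - vs ! k = exp (\<i> * of_real (\<alpha>s ! k)))"
    show "e (last vs) = \<i> ^ length \<alpha>s * (if last vs \<in> B then 1 else hth \<tau> lam0 l) *
                 (\<Prod>k < length \<alpha>s. 1 / fth \<tau> (of_real (\<alpha>s ! k) - l))"
      unfolding e_def col_def h_def using a Pval[of vs] formula[of \<alpha>s vs] by simp
  qed
  have part2: "e' (last vs) = col (last vs) * pw s vs"
    if rel: "disc_exp_rel B W E \<tau> lam0 l e'" and e0: "e' v0 = 1" and hnz: "h \<noteq> 0"
      and vp: "qg_path E vs" "hd vs = v0" for e' vs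
    using vp
  proof (induction vs rule: rev_induct)
    case Nil thus ?case by (simp add: qp_nil)
  next
    case (snoc v ws)
    show ?case
    proof (cases "ws = []")
      case True
      thus ?thesis using snoc.prems e0 v0 unfolding col_def by simp
    next
      case False
      define u where "u = last ws"
      obtain ws' where wsu: "ws = ws' @ [u]" using snoc_obtain[OF False] u_def by blast
      have "qg_path E (ws' @ [u, v])" using snoc.prems(1) wsu by simp
      hence adj: "qg_adj E u v" and wp: "qg_path E ws" using qp_butlast wsu by auto
      have hws: "hd ws = v0" using snoc.prems(2) False by simp
      have IH: "e' u = col u * pw s ws" using snoc.IH[OF wp hws] u_def by simp
      have pws: "pw s (ws @ [v]) = pw s ws * s (v - u)"
        unfolding wsu using pw_snoc[of s ws' u v] by simp
      have relE: "\<And>b w \<alpha>. (b, w) \<in> E \<Longrightarrow> w - b = exp (\<i> * of_real \<alpha>) \<Longrightarrow>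
          fth \<tau> (of_real \<alpha> - l) * e' w = \<i> * h * e' b"
        using rel unfolding disc_exp_rel_def h_def by blast
      show ?thesis
      proof (cases "(u, v) \<in> E")
        case True
        have uB: "u \<in> B" and vB: "v \<notin> B" using True EBW BW by auto
        define \<alpha> where "\<alpha> = Arg (v - u)"
        have ex: "v - u = exp (\<i> * of_real \<alpha>)" unfolding \<alpha>_def by (rule unit_exp[OF adj_unit[OF adj]])
        have nz: "fth \<tau> (of_real \<alpha> - l) \<noteq> 0" using fnz[OF adj ex] .
        have r: "fth \<tau> (of_real \<alpha> - l) * e' v = \<i> * h * e' u" using relE[OF True ex] .
        have "e' v = \<i> * h * pw s ws / fth \<tau> (of_real \<alpha> - l)"
          using r nz IH uB unfolding col_def by (simp add: field_simps)
        thus ?thesis using pws ex s_exp vB unfolding col_def by simp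
      next
        case False
        hence vu: "(v, u) \<in> E" using adj unfolding qg_adj_def by simp
        have vB: "v \<in> B" and uB: "u \<notin> B" using vu EBW BW by auto
        have adj': "qg_adj E v u" using vu by (simp add: qg_adj_def)
        define \<beta> where "\<beta> = Arg (u - v)"
        have ex: "u - v = exp (\<i> * of_real \<beta>)" unfolding \<beta>_def by (rule unit_exp[OF adj_unit[OF adj']])
        have ex2: "v - u = exp (\<i> * of_real (\<beta> + pi))"
        proof -
          have "v - u = - (u - v)" by simp
          also have "\<dots> = exp (\<i> * of_real (\<beta> + pi))" by (rule neg_exp_shift[OF ex])
          finally show ?thesis .
        qed
        have nz: "fth \<tau> (of_real \<beta> - l) \<noteq> 0" using fnz[OF adj' ex] .
        have pr: "fth \<tau> (of_real \<beta> - l) * fth \<tau> ((of_real \<beta> - l) + of_real pi) = -1"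
          by (rule fth_prod[OF tau nz])
        have sh: "of_real (\<beta> + pi) - l = (of_real \<beta> - l) + complex_of_real pi" by simp
        have sv: "s (v - u) = \<i> / fth \<tau> ((of_real \<beta> - l) + of_real pi)" unfolding ex2 s_exp sh ..
        have r: "fth \<tau> (of_real \<beta> - l) * e' u = \<i> * h * e' v" using relE[OF vu ex] .
        hence "fth \<tau> (of_real \<beta> - l) * h * pw s ws = \<i> * h * e' v" using IH uB unfolding col_def by (simp add: mult_ac)
        hence ev: "e' v = fth \<tau> (of_real \<beta> - l) * pw s ws / \<i>" using hnz by (simp add: field_simps)
        have fpi: "fth \<tau> ((of_real \<beta> - l) + of_real pi) = - 1 / fth \<tau> (of_real \<beta> - l)"
          using pr nz by (simp add: field_simps)
        have "s (v - u) = - \<i> * fth \<tau> (of_real \<beta> - l)" unfolding sv fpi by simp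
        thus ?thesis using ev pws vB unfolding col_def by (simp add: field_simps)
      qed
    qed
  qed
  show ?thesis
  proof (intro conjI impI allI)
    show "\<exists>e. disc_exp_rel B W E \<tau> lam0 l e \<and> e v0 = 1 \<and>
            (\<forall>vs (\<alpha>s::real list). qg_path E vs \<and> hd vs = v0 \<and> length \<alpha>s + 1 = length vs \<and>
               (\<forall>k < length \<alpha>s. vs ! Suc k - vs ! k = exp (\<i> * of_real (\<alpha>s ! k))) \<longrightarrow>
               e (last vs) = \<i> ^ length \<alpha>s * (if last vs \<in> B then 1 else hth \<tau> lam0 l) *
                 (\<Prod>k < length \<alpha>s. 1 / fth \<tau> (of_real (\<alpha>s ! k) - l)))"
      using part1 by blast
  next
    fix e' vs and \<alpha>s :: "real list"
    assume hnz: "hth \<tau> lam0 l \<noteq> 0" and a1: "disc_exp_rel B W E \<tau> lam0 l e' \<and> e' v0 = 1"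
      and a: "qg_path E vs \<and> hd vs = v0 \<and> length \<alpha>s + 1 = length vs \<and>
               (\<forall>k < length \<alpha>s. vs ! Suc k - vs ! k = exp (\<i> * of_real (\<alpha>s ! k)))"
    have "e' (last vs) = col (last vs) * pw s vs"
      using part2[of e' vs] a1 a hnz unfolding h_def by blast
    thus "e' (last vs) = \<i> ^ length \<alpha>s * (if last vs \<in> B then 1 else hth \<tau> lam0 l) *
                 (\<Prod>k < length \<alpha>s. 1 / fth \<tau> (of_real (\<alpha>s ! k) - l))"
      using formula[of \<alpha>s vs] a unfolding col_def h_def by simp
  qed
qed

end
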